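(* Let $\Xi\subset\mathbb{F}^2$ be a finite set of distinct points, $\prec$ any term order on $\mathbb{F}[x,y]$, and $\Xi'\subset\Xi$ an $\mathcal{A}'$-cartesian subset for a lower set $\mathcal{A}'$. Then $\mathcal{A}'=\mathrm{N}_\prec(\Xi')\subset\mathrm{N}_\prec(\Xi)$; equivalently, $\{x^iy^j:(i,j)\in\mathcal{A}'\}$ equals the Gröbner escalier of $\mathcal{I}(\Xi')$ w.r.t. $\prec$ and is contained in the Gröbner escalier of $\mathcal{I}(\Xi)$ w.r.t. $\prec$.
   Context: $\mathbb{F}$ is a field. A finite set $\mathcal{A}\subset\mathbb{N}_0^2$ is a lower set if with each $(\alpha_1,\alpha_2)$ it contains all $(\alpha_1',\alpha_2')\in\mathbb{N}_0^2$ with $\alpha_1'\le\alpha_1,\alpha_2'\le\alpha_2$. A finite set $\Xi'$ of distinct points is $\mathcal{A}$-cartesian if $\Xi'=\{(x_i,y_j):(i,j)\in\mathcal{A}\}$ with pairwise distinct $x_i$ and pairwise distinct $y_j$. For a finite point set $\Xi$, $\mathcal{I}(\Xi)\subset\mathbb{F}[x,y]$ is the ideal of polynomials vanishing on $\Xi$; its Gröbner escalier w.r.t. $\prec$ is the set of monomials not divisible by the leading monomial (w.r.t. $\prec$) of any nonzero element of $\mathcal{I}(\Xi)$, and $\mathrm{N}_\prec(\Xi)=\{(i,j)\in\mathbb{N}_0^2: x^iy^j \text{ is in this escalier}\}$. *)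

theory Defs
  imports Main "HOL-Library.Poly_Mapping"
begin

text \<open>Bivariate polynomials over a field: finitely supported coefficient maps from
exponent pairs (i,j) (standing for the monomial x^i y^j) to coefficients.\<close>
type_synonym 'a bipoly = "(nat \<times> nat) \<Rightarrow>\<^sub>0 'a"

definition bi_eval :: "'a::comm_ring_1 bipoly \<Rightarrow> 'a \<times> 'a \<Rightarrow> 'a" where
  "bi_eval p pt = (\<Sum>m\<in>Poly_Mapping.keys p. Poly_Mapping.lookup p m * fst pt ^ fst m * snd pt ^ snd m)"

definition term_order :: "(nat \<times> nat \<Rightarrow> nat \<times> nat \<Rightarrow> bool) \<Rightarrow> bool" where
  "term_order le \<longleftrightarrow>
     (\<forall>a. le a a) \<and>
     (\<forall>a b. le a b \<and> le b a \<longrightarrow> a = b) \<and>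
     (\<forall>a b c. le a b \<and> le b c \<longrightarrow> le a c) \<and>
     (\<forall>a b. le a b \<or> le b a) \<and>
     (\<forall>a. le (0,0) a) \<and>
     (\<forall>a1 a2 b1 b2 c1 c2. le (a1,a2) (b1,b2) \<longrightarrow> le (a1+c1, a2+c2) (b1+c1, b2+c2))"

definition lead_mon :: "(nat \<times> nat \<Rightarrow> nat \<times> nat \<Rightarrow> bool) \<Rightarrow> 'a::zero bipoly \<Rightarrow> nat \<times> nat" where
  "lead_mon le p = (THE m. m \<in> Poly_Mapping.keys p \<and> (\<forall>k\<in>Poly_Mapping.keys p. le k m))"

definition mon_dvd :: "nat \<times> nat \<Rightarrow> nat \<times> nat \<Rightarrow> bool" where
  "mon_dvd a b \<longleftrightarrow> fst a \<le> fst b \<and> snd a \<le> snd b"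

definition van_ideal :: "('a::comm_ring_1 \<times> 'a) set \<Rightarrow> 'a bipoly set" where
  "van_ideal Xi = {p. \<forall>pt\<in>Xi. bi_eval p pt = 0}"

definition escalier :: "(nat \<times> nat \<Rightarrow> nat \<times> nat \<Rightarrow> bool) \<Rightarrow> ('a::comm_ring_1 \<times> 'a) set \<Rightarrow> (nat \<times> nat) set" where
  "escalier le Xi = {ij. \<forall>p\<in>van_ideal Xi. p \<noteq> 0 \<longrightarrow> \<not> mon_dvd (lead_mon le p) ij}"

definition lower_set :: "(nat \<times> nat) set \<Rightarrow> bool" where
  "lower_set A \<longleftrightarrow> finite A \<and>
     (\<forall>a1 a2 b1 b2. (a1, a2) \<in> A \<and> b1 \<le> a1 \<and> b2 \<le> a2 \<longrightarrow> (b1, b2) \<in> A)"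

definition cartesian :: "(nat \<times> nat) set \<Rightarrow> ('a \<times> 'a) set \<Rightarrow> bool" where
  "cartesian A Xi \<longleftrightarrow> (\<exists>x y :: nat \<Rightarrow> 'a.
      inj_on x (fst ` A) \<and> inj_on y (snd ` A) \<and>
      Xi = {(x i, y j) | i j. (i, j) \<in> A})"

end

theory Submission
  imports Defs "HOL-Analysis.Analysis" "HOL-Computational_Algebra.Polynomial"
begin

lemma dd_exists:
  fixes x :: "nat \<Rightarrow> 'a::field"
  shows "inj_on x {..n} \<Longrightarrow> \<exists>c. \<forall>f. degree f \<le> n \<longrightarrow> (\<Sum>k\<le>n. c k * poly f (x k)) = coeff f n"
proof (induction n arbitrary: x)
  case 0
  show ?case
  proof (intro exI[of _ "\<lambda>_. 1"] allI impI)
    fix f :: "'a poly" assume "degree f \<le> 0"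
    then show "(\<Sum>k\<le>0. 1 * poly f (x k)) = coeff f 0"
      by (simp add: poly_altdef)
  qed
next
  case (Suc n)
  let ?x' = "\<lambda>k. x (Suc k)"
  have "inj_on ?x' {..n}" using Suc.prems by (auto simp: inj_on_def)
  then obtain c' where c': "\<And>f. degree f \<le> n \<Longrightarrow> (\<Sum>k\<le>n. c' k * poly f (?x' k)) = coeff f n"
    using Suc.IH by blast
  have dne: "x (Suc k) - x 0 \<noteq> 0" if "k \<le> n" for k
    using Suc.prems that by (auto simp: inj_on_def)
  define c where "c = (\<lambda>k. case k of 0 \<Rightarrow> - (\<Sum>k\<le>n. c' k / (x (Suc k) - x 0))
      | Suc k \<Rightarrow> c' k / (x (Suc k) - x 0))"
  show ?case
  proof (intro exI[of _ c] allI impI)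
    fix f :: "'a poly" assume df: "degree f \<le> Suc n"
    define q where "q = synthetic_div f (x 0)"
    have id: "[:-(x 0), 1:] * q + [:poly f (x 0):] = f" unfolding q_def by (rule synthetic_div_correct')
    have dq: "degree q \<le> n" unfolding q_def using df by (simp add: degree_synthetic_div)
    have "coeff f (Suc n) = coeff ([:-(x 0), 1:] * q + [:poly f (x 0):]) (Suc n)" using id by simp
    also have "\<dots> = coeff q n - x 0 * coeff q (Suc n)"
      by (simp add: mult_pCons_left coeff_pCons)
    also have "coeff q (Suc n) = 0" using dq by (simp add: coeff_eq_0)
    finally have cq: "coeff f (Suc n) = coeff q n" by simp
    have pq: "poly q (x (Suc k)) = (poly f (x (Suc k)) - poly f (x 0)) / (x (Suc k) - x 0)" if "k \<le> n" for k
    proof -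
      have "poly f (x (Suc k)) = (x (Suc k) - x 0) * poly q (x (Suc k)) + poly f (x 0)"
        by (subst id[symmetric]) (simp add: algebra_simps)
      then show ?thesis using dne[OF that] by (simp add: field_simps)
    qed
    have "(\<Sum>k\<le>Suc n. c k * poly f (x k)) = c 0 * poly f (x 0) + (\<Sum>k\<le>n. c (Suc k) * poly f (x (Suc k)))"
      by (subst sum.atMost_Suc_shift) simp
    also have "\<dots> = (\<Sum>k\<le>n. c' k * ((poly f (x (Suc k)) - poly f (x 0)) / (x (Suc k) - x 0)))"
      by (simp add: c_def sum_distrib_right sum_subtractf diff_divide_distrib right_diff_distrib algebra_simps sum_distrib_left)
    also have "\<dots> = (\<Sum>k\<le>n. c' k * poly q (?x' k))"
      by (rule sum.cong) (auto simp: pq)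
    also have "\<dots> = coeff f (Suc n)" using c'[OF dq] cq by simp
    finally show "(\<Sum>k\<le>Suc n. c k * poly f (x k)) = coeff f (Suc n)" .
  qed
qed

lemma dd_monom:
  fixes x :: "nat \<Rightarrow> 'a::field"
  assumes "inj_on x {..n}"
  shows "\<exists>c. \<forall>s\<le>n. (\<Sum>k\<le>n. c k * x k ^ s) = (if s = n then 1 else 0)"
proof -
  obtain c where c: "\<And>f. degree f \<le> n \<Longrightarrow> (\<Sum>k\<le>n. c k * poly f (x k)) = coeff f n"
    using dd_exists[OF assms] by blast
  show ?thesis
  proof (intro exI[of _ c] allI impI)
    fix s assume "s \<le> n"
    then have "degree (monom (1::'a) s) \<le> n" by (simp add: degree_monom_eq)
    from c[OF this] show "(\<Sum>k\<le>n. c k * x k ^ s) = (if s = n then 1 else 0)"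
      by (simp add: poly_monom)
  qed
qed
lemma to_props:
  assumes "term_order le"
  shows to_refl: "le a a"
    and to_antisym: "le a b \<Longrightarrow> le b a \<Longrightarrow> a = b"
    and to_trans: "le a b \<Longrightarrow> le b c \<Longrightarrow> le a c"
    and to_total: "le a b \<or> le b a"
    and to_zero: "le (0,0) a"
    and to_mono: "le (a1,a2) (b1,b2) \<Longrightarrow> le (a1+c1, a2+c2) (b1+c1, b2+c2)"
proof -
  note d = assms[unfolded term_order_def]
  have h1: "\<forall>a. le a a" using d by (rule conjunct1)
  have h2: "\<forall>a b. le a b \<and> le b a \<longrightarrow> a = b" using d[THEN conjunct2] by (rule conjunct1)
  have h3: "\<forall>a b c. le a b \<and> le b c \<longrightarrow> le a c" using d[THEN conjunct2, THEN conjunct2] by (rule conjunct1)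
  have h4: "\<forall>a b. le a b \<or> le b a" using d[THEN conjunct2, THEN conjunct2, THEN conjunct2] by (rule conjunct1)
  have h5: "\<forall>a. le (0,0) a" using d[THEN conjunct2, THEN conjunct2, THEN conjunct2, THEN conjunct2] by (rule conjunct1)
  have h6: "\<forall>a1 a2 b1 b2 c1 c2. le (a1,a2) (b1,b2) \<longrightarrow> le (a1+c1, a2+c2) (b1+c1, b2+c2)"
    using d[THEN conjunct2, THEN conjunct2, THEN conjunct2, THEN conjunct2] by (rule conjunct2)
  show "le a a" using h1 by (rule spec)
  show "le a b \<Longrightarrow> le b a \<Longrightarrow> a = b" using h2 by iprover
  show "le a b \<Longrightarrow> le b c \<Longrightarrow> le a c" using h3 by iprover
  show "le a b \<or> le b a" using h4 by iprover
  show "le (0,0) a" using h5 by (rule spec)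
  show "le (a1,a2) (b1,b2) \<Longrightarrow> le (a1+c1, a2+c2) (b1+c1, b2+c2)" using h6 by iprover
qed

definition bip :: "'a::comm_ring_1 poly \<Rightarrow> 'a poly \<Rightarrow> 'a bipoly" where
  "bip f g = Abs_poly_mapping (\<lambda>(a,b). coeff f a * coeff g b)"

lemma lookup_bip: "Poly_Mapping.lookup (bip f g) = (\<lambda>(a,b). coeff f a * coeff g b)"
proof -
  have "{m. (\<lambda>(a,b). coeff f a * coeff g b) m \<noteq> 0} \<subseteq> {..degree f} \<times> {..degree g}"
    by (auto intro: le_degree)
  then have "finite {m. (\<lambda>(a,b). coeff f a * coeff g b) m \<noteq> 0}"
    by (rule finite_subset) simp
  then show ?thesis unfolding bip_def by simp
qed

lemma keys_bip: "Poly_Mapping.keys (bip f g) \<subseteq> {..degree f} \<times> {..degree g}"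
  by (auto simp: in_keys_iff lookup_bip intro: le_degree)

lemma bi_eval_bip: "bi_eval (bip f g) (u,v) = poly f u * poly g v"
proof -
  have "bi_eval (bip f g) (u,v) = (\<Sum>m\<in>{..degree f} \<times> {..degree g}.
      Poly_Mapping.lookup (bip f g) m * u ^ fst m * v ^ snd m)"
    unfolding bi_eval_def fst_conv snd_conv
    by (rule sum.mono_neutral_left) (auto simp: keys_bip in_keys_iff)
  also have "\<dots> = (\<Sum>a\<le>degree f. \<Sum>b\<le>degree g. (coeff f a * u ^ a) * (coeff g b * v ^ b))"
    by (subst sum.cartesian_product) (simp add: lookup_bip mult_ac case_prod_beta)
  also have "\<dots> = poly f u * poly g v"
    by (simp add: poly_altdef sum_product)
  finally show ?thesis .
qed

lemma max_exists:
  assumes "term_order le" "finite S" "S \<noteq> {}"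
  shows "\<exists>m\<in>S. \<forall>k\<in>S. le k m"
  using assms(2,3)
proof (induction S rule: finite_ne_induct)
  case (singleton x)
  have "le x x" using assms(1) by (rule to_refl)
  then show ?case by simp
next
  case (insert x F)
  then obtain m where m: "m \<in> F" "\<forall>k\<in>F. le k m" by blast
  show ?case
  proof (cases "le x m")
    case True then show ?thesis using m by auto
  next
    case False
    then have lmx: "le m x" using to_total[OF assms(1), of x m] by blast
    have "\<forall>k\<in>insert x F. le k x"
    proof
      fix k assume "k \<in> insert x F"
      then show "le k x"
      proof
        assume "k = x" then show ?thesis using to_refl[OF assms(1)] by simp
      next
        assume "k \<in> F" then have "le k m" using m by blast
        then show ?thesis using lmx by (rule to_trans[OF assms(1)])
      qed
    qed
    then show ?thesis by blast
  qed
qed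

lemma lead_mon_eq:
  assumes "term_order le" "m \<in> Poly_Mapping.keys p" "\<forall>k\<in>Poly_Mapping.keys p. le k m"
  shows "lead_mon le p = m"
  unfolding lead_mon_def
proof (rule the_equality)
  show "m \<in> Poly_Mapping.keys p \<and> (\<forall>k\<in>Poly_Mapping.keys p. le k m)" using assms by blast
next
  fix m' assume "m' \<in> Poly_Mapping.keys p \<and> (\<forall>k\<in>Poly_Mapping.keys p. le k m')"
  then show "m' = m" using assms to_antisym[OF assms(1), of m' m] by blast
qed

lemma lead_mon_props:
  assumes "term_order le" "p \<noteq> 0"
  shows "lead_mon le p \<in> Poly_Mapping.keys p \<and> (\<forall>k\<in>Poly_Mapping.keys p. le k (lead_mon le p))"
proof -
  obtain m where "m \<in> Poly_Mapping.keys p" "\<forall>k\<in>Poly_Mapping.keys p. le k m"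
    using max_exists[OF assms(1), of "Poly_Mapping.keys p"] assms(2) by auto
  moreover have "lead_mon le p = m" by (rule lead_mon_eq[OF assms(1)]) (use calculation in auto)
  ultimately show ?thesis by simp
qed

lemma dvd_le:
  assumes "term_order le" "mon_dvd a b"
  shows "le a b"
proof -
  obtain a1 a2 b1 b2 where ab: "a = (a1,a2)" "b = (b1,b2)" by (cases a, cases b)
  have "le (0,0) (b1-a1, b2-a2)" using assms(1) by (rule to_zero)
  then have "le (0+a1, 0+a2) (b1-a1+a1, b2-a2+a2)" 
    by (rule to_mono[OF assms(1)])
  then show ?thesis using assms(2) ab by (simp add: mon_dvd_def)
qed


lemma monic_lin_prod:
  fixes x :: "nat \<Rightarrow> 'a::field"
  shows "degree (\<Prod>k<i. [:-x k, 1:]) = i \<and> coeff (\<Prod>k<i. [:-x k, 1:]) i = 1"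
proof -
  have "degree (\<Prod>k<i. [:-x k, 1:]) = (\<Sum>k<i. degree [:-x k, 1:])"
    by (rule degree_prod_eq_sum_degree) auto
  then have d: "degree (\<Prod>k<i. [:-x k, 1:]) = i" by simp
  have "lead_coeff (\<Prod>k<i. [:-x k, 1:]) = 1" by (simp add: lead_coeff_prod)
  with d show ?thesis by simp
qed

lemma poly_lin_prod_zero:
  fixes x :: "nat \<Rightarrow> 'a::field"
  assumes "j < i"
  shows "poly (\<Prod>k<i. [:-x k, 1:]) (x j) = 0"
  using assms by (auto simp: poly_prod)

theorem mainTheorem6:
  fixes Xi Xi' :: "('a::field \<times> 'a) set"
    and le :: "nat \<times> nat \<Rightarrow> nat \<times> nat \<Rightarrow> bool"
    and A' :: "(nat \<times> nat) set"
  assumes "finite Xi"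
    and "term_order le"
    and "lower_set A'"
    and "cartesian A' Xi'"
    and "Xi' \<subseteq> Xi"
  shows "A' = escalier le Xi' \<and> escalier le Xi' \<subseteq> escalier le Xi"
proof -
  note to = assms(2)
  have low: "\<And>a1 a2 b1 b2. (a1, a2) \<in> A' \<Longrightarrow> b1 \<le> a1 \<Longrightarrow> b2 \<le> a2 \<Longrightarrow> (b1, b2) \<in> A'"
    using assms(3) unfolding lower_set_def by blast
  obtain x y :: "nat \<Rightarrow> 'a" where injx: "inj_on x (fst ` A')" and injy: "inj_on y (snd ` A')"
    and Xi'_eq: "Xi' = {(x i, y j) | i j. (i, j) \<in> A'}"
    using assms(4) unfolding cartesian_def by blast
  have inXi': "(x k, y l) \<in> Xi'" if "(k,l) \<in> A'" for k l using that Xi'_eq by blast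
  have sub1: "escalier le Xi' \<subseteq> A'"
  proof
    fix ij assume ij: "ij \<in> escalier le Xi'"
    obtain i j where ijp: "ij = (i,j)" by (cases ij)
    show "ij \<in> A'"
    proof (rule ccontr)
      assume nA: "ij \<notin> A'"
      define f where "f = (\<Prod>k<i. [:-x k, 1:])"
      define g where "g = (\<Prod>l<j. [:-y l, 1:])"
      have df: "degree f = i" "coeff f i = 1" using monic_lin_prod[of x i] unfolding f_def by auto
      have dg: "degree g = j" "coeff g j = 1" using monic_lin_prod[of y j] unfolding g_def by auto
      define p where "p = bip f g"
      have keysp: "Poly_Mapping.keys p \<subseteq> {..i} \<times> {..j}" using keys_bip[of f g] df dg p_def by simp
      have ijk: "(i,j) \<in> Poly_Mapping.keys p" by (simp add: p_def in_keys_iff lookup_bip df dg)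
      have lm: "lead_mon le p = (i,j)"
      proof (rule lead_mon_eq[OF to ijk], intro ballI)
        fix k assume "k \<in> Poly_Mapping.keys p"
        then have "mon_dvd k (i,j)" using keysp by (auto simp: mon_dvd_def)
        then show "le k (i,j)" by (rule dvd_le[OF to])
      qed
      have pne: "p \<noteq> 0" using ijk by auto
      have pvan: "p \<in> van_ideal Xi'"
        unfolding van_ideal_def
      proof (safe)
        fix u v assume "(u,v) \<in> Xi'"
        then obtain k l where kl: "(k,l) \<in> A'" "u = x k" "v = y l" using Xi'_eq by blast
        have "k < i \<or> l < j"
        proof (rule ccontr)
          assume "\<not> (k < i \<or> l < j)"
          then have "(i,j) \<in> A'" using low[OF kl(1)] by auto
          then show False using nA ijp by simp
        qed
        then have "poly f u = 0 \<or> poly g v = 0"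
          using kl poly_lin_prod_zero unfolding f_def g_def by blast
        then show "bi_eval p (u,v) = 0" by (auto simp: p_def bi_eval_bip)
      qed
      have "mon_dvd (lead_mon le p) ij" using lm ijp by (simp add: mon_dvd_def)
      then show False using ij pne pvan unfolding escalier_def by blast
    qed
  qed
  have sub2: "A' \<subseteq> escalier le Xi'"
  proof
    fix ij assume ijA: "ij \<in> A'"
    obtain i j where ijp: "ij = (i,j)" by (cases ij)
    show "ij \<in> escalier le Xi'"
      unfolding escalier_def
    proof (safe)
      fix p assume pvan: "p \<in> van_ideal Xi'" and pne: "p \<noteq> 0" and dv: "mon_dvd (lead_mon le p) ij"
      obtain a b where ab: "lead_mon le p = (a,b)" by (cases "lead_mon le p")
      have abA: "(a,b) \<in> A'" using low[of i j a b] ijA ijp dv ab by (simp add: mon_dvd_def)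
      have mk: "(a,b) \<in> Poly_Mapping.keys p" and mmax: "\<forall>k\<in>Poly_Mapping.keys p. le k (a,b)"
        using lead_mon_props[OF to pne] ab by auto
      have "inj_on x {..a}"
      proof (rule inj_on_subset[OF injx])
        show "{..a} \<subseteq> fst ` A'"
        proof
          fix k assume "k \<in> {..a}"
          then have "(k,0) \<in> A'" using low[OF abA] by simp
          then show "k \<in> fst ` A'" by force
        qed
      qed
      then obtain c where c: "\<And>s. s \<le> a \<Longrightarrow> (\<Sum>k\<le>a. c k * x k ^ s) = (if s = a then 1 else 0)"
        using dd_monom by blast
      have "inj_on y {..b}"
      proof (rule inj_on_subset[OF injy])
        show "{..b} \<subseteq> snd ` A'"
        proof
          fix k assume "k \<in> {..b}"
          then have "(0,k) \<in> A'" using low[OF abA] by simp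
          then show "k \<in> snd ` A'" by force
        qed
      qed
      then obtain d where d: "\<And>s. s \<le> b \<Longrightarrow> (\<Sum>l\<le>b. d l * y l ^ s) = (if s = b then 1 else 0)"
        using dd_monom by blast
      define F where "F = (\<lambda>mm. Poly_Mapping.lookup p mm * (\<Sum>k\<le>a. c k * x k ^ fst mm) * (\<Sum>l\<le>b. d l * y l ^ snd mm))"
      have "(\<Sum>k\<le>a. \<Sum>l\<le>b. c k * d l * bi_eval p (x k, y l)) = 0"
      proof (intro sum.neutral ballI)
        fix k l assume "k \<in> {..a}" "l \<in> {..b}"
        then have "(k,l) \<in> A'" using low[OF abA] by simp
        then have "bi_eval p (x k, y l) = 0" using pvan inXi' unfolding van_ideal_def by blast
        then show "c k * d l * bi_eval p (x k, y l) = 0" by simp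
      qed
      moreover have "(\<Sum>k\<le>a. \<Sum>l\<le>b. c k * d l * bi_eval p (x k, y l)) = (\<Sum>mm\<in>Poly_Mapping.keys p. F mm)"
      proof -
        have "(\<Sum>k\<le>a. \<Sum>l\<le>b. c k * d l * bi_eval p (x k, y l))
            = (\<Sum>k\<le>a. \<Sum>l\<le>b. \<Sum>mm\<in>Poly_Mapping.keys p. Poly_Mapping.lookup p mm * (c k * x k ^ fst mm) * (d l * y l ^ snd mm))"
        proof (intro sum.cong refl)
          fix k l
          show "c k * d l * bi_eval p (x k, y l) = (\<Sum>mm\<in>Poly_Mapping.keys p. Poly_Mapping.lookup p mm * (c k * x k ^ fst mm) * (d l * y l ^ snd mm))"
            unfolding bi_eval_def fst_conv snd_conv sum_distrib_left
            by (rule sum.cong) (simp_all add: mult_ac)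
        qed
        also have "\<dots> = (\<Sum>mm\<in>Poly_Mapping.keys p. \<Sum>k\<le>a. \<Sum>l\<le>b. Poly_Mapping.lookup p mm * (c k * x k ^ fst mm) * (d l * y l ^ snd mm))"
          by (subst sum.swap, subst (2) sum.swap) simp
        also have "\<dots> = (\<Sum>mm\<in>Poly_Mapping.keys p. F mm)"
        proof (rule sum.cong[OF refl])
          fix mm
          have "F mm = (\<Sum>k\<le>a. Poly_Mapping.lookup p mm * (c k * x k ^ fst mm)) * (\<Sum>l\<le>b. d l * y l ^ snd mm)"
            unfolding F_def by (simp only: sum_distrib_left)
          also have "\<dots> = (\<Sum>k\<le>a. \<Sum>l\<le>b. Poly_Mapping.lookup p mm * (c k * x k ^ fst mm) * (d l * y l ^ snd mm))"
            by (rule sum_product)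
          finally show "(\<Sum>k\<le>a. \<Sum>l\<le>b. Poly_Mapping.lookup p mm * (c k * x k ^ fst mm) * (d l * y l ^ snd mm)) = F mm" by simp
        qed
        finally show ?thesis .
      qed
      moreover have "(\<Sum>mm\<in>Poly_Mapping.keys p. F mm) = F (a,b)"
      proof -
       have "sum F (Poly_Mapping.keys p) = sum F {(a,b)}"
       proof (rule sum.mono_neutral_right)
        show "{(a,b)} \<subseteq> Poly_Mapping.keys p" using mk by simp
        show "finite (Poly_Mapping.keys p)" by simp
        show "\<forall>mm\<in>Poly_Mapping.keys p - {(a,b)}. F mm = 0"
        proof
        fix mm assume mm1: "mm \<in> Poly_Mapping.keys p - {(a,b)}"
        then have mmk: "mm \<in> Poly_Mapping.keys p" and ne: "mm \<noteq> (a,b)" by auto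
        obtain s t where st: "mm = (s,t)" by (cases mm)
        show "F mm = 0"
        proof (cases "s < a")
          case True then show ?thesis using c[of s] st by (simp add: F_def)
        next
          case sa: False
          show ?thesis
          proof (cases "t < b")
            case True then show ?thesis using d[of t] st by (simp add: F_def)
          next
            case False
            then have "mon_dvd (a,b) mm" using sa st by (simp add: mon_dvd_def)
            then have "le (a,b) mm" by (rule dvd_le[OF to])
            moreover have "le mm (a,b)" using mmax mmk by blast
            ultimately have "mm = (a,b)" by (rule to_antisym[OF to, rotated])
            then show ?thesis using ne by simp
          qed
        qed
        qed
       qed
       then show ?thesis by simp
      qed
      moreover have "F (a,b) \<noteq> 0" using c[of a] d[of b] mk by (simp add: F_def in_keys_iff)
      ultimately show False by simp
    qed
  qed
  have sub3: "escalier le Xi' \<subseteq> escalier le Xi"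
  proof -
    have "van_ideal Xi \<subseteq> van_ideal Xi'" using assms(5) unfolding van_ideal_def by blast
    then show ?thesis unfolding escalier_def by blast
  qed
  show ?thesis using sub1 sub2 sub3 by blast
qed

end
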